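(* Let $\mu$ be a Borel probability measure on a $d$-dimensional real Hilbert space $V$ with compact support $\Omega$, let $\eta>0$, and let $f$ be a function with $\mu(B_{\eta/2}(X))\ge \exp(-f(2/\eta,d))$ for every $X\in\Omega$. Let $A$ be in the $\eta$-interior of $\mathrm{hull}(\Omega)$. Then any $Y^\star\in V_{\mathcal L}$ minimizing $F_A$ over $V_{\mathcal L}$ satisfies $\|Y^\star\|\le 2\eta^{-1} f(2\eta^{-1},d)$. In particular, if $\mu$ is balanced (so $f$ is a polynomial), then $\|Y^\star\|\le \mathrm{poly}(\eta^{-1},d)$.
   Context: $B_r(X)$ is the open ball of radius $r$ about $X$. $F_A(Y)=\langle Y,A\rangle+\log\int_\Omega e^{-\langle Y,X\rangle}d\mu(X)$. $V_{\mathcal L}$ is the linear subspace parallel to the affine hull $\mathrm{aff}(\Omega)$. $A$ is in the $\eta$-interior of $\mathrm{hull}(\Omega)$ if $B_\eta(A)\cap \mathrm{aff}(\Omega)\subseteq \mathrm{hull}(\Omega)$. $\mu$ is balanced if there is a polynomial $f$ such that for all $\delta>0$ and $X\in\Omega$, $\mu(B_\delta(X))\ge \exp(-f(\delta^{-1},d))$. *)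

theory Defs
  imports "HOL-Analysis.Analysis" "HOL-Probability.Probability"
begin

definition measure_support :: "'a::topological_space measure \<Rightarrow> 'a set" where
  "measure_support M = {x. \<forall>U. open U \<longrightarrow> x \<in> U \<longrightarrow> emeasure M U > 0}"

definition parallel_subspace :: "'a::real_vector set \<Rightarrow> 'a set" where
  "parallel_subspace S = {x - y | x y. x \<in> affine hull S \<and> y \<in> affine hull S}"

definition eta_interior :: "real \<Rightarrow> 'a::real_normed_vector set \<Rightarrow> 'a \<Rightarrow> bool" where
  "eta_interior \<eta> \<Omega> A \<longleftrightarrow> A \<in> convex hull \<Omega> \<and> ball A \<eta> \<inter> affine hull \<Omega> \<subseteq> convex hull \<Omega>"

definition F_obj :: "'a::euclidean_space measure \<Rightarrow> 'a \<Rightarrow> 'a \<Rightarrow> real" where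
  "F_obj \<mu> A Y = inner Y A + ln (\<integral>X. exp (- inner Y X) \<partial>\<mu>)"

end

theory Submission
  imports Defs
begin

lemma support_null:
  fixes M :: "'a::euclidean_space measure"
  assumes "sets M = sets borel"
  shows "- measure_support M \<in> null_sets M"
proof -
  define F where "F = {U::'a set. open U \<and> emeasure M U = 0}"
  have eq: "\<Union>F = - measure_support M"
    unfolding F_def measure_support_def by (auto simp: not_less)
  obtain F' where F': "F' \<subseteq> F" "countable F'" "\<Union>F' = \<Union>F"
    using Lindelof[of F] unfolding F_def by blast
  have "(\<Union>U\<in>F'. U) \<in> null_sets M"
  proof (rule null_sets_UN')
    fix U assume "U \<in> F'"
    then have "open U" "emeasure M U = 0" using F' unfolding F_def by auto
    then show "U \<in> null_sets M" using assms by (auto simp: null_sets_def)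
  qed (use F' in auto)
  then show ?thesis using F' eq by simp
qed

lemma half_gt: fixes x e :: real shows "x < e \<Longrightarrow> x < (x + e)/2" by (simp add: field_simps)

lemma lim_arg:
  fixes n c \<eta> :: real
  assumes "\<eta> > 0" "n \<ge> 0" "c \<ge> 0" "\<And>t. 0 \<le> t \<Longrightarrow> t < \<eta> \<Longrightarrow> t * n \<le> c"
  shows "\<eta> * n \<le> c"
proof (rule ccontr)
  assume "\<not> ?thesis"
  then have h: "c < \<eta> * n" by simp
  then have "n > 0" using assms by (smt (verit) mult_nonneg_nonpos)
  define t where "t = (c/n + \<eta>)/2"
  have "c/n < \<eta>" using h \<open>n>0\<close> by (simp add: divide_less_eq mult.commute)
  moreover have "c/n \<ge> 0" using assms by simp
  ultimately have "0 \<le> t" "t < \<eta>" unfolding t_def by auto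
  then have "t * n \<le> c" using assms by blast
  moreover have "t * n > c"
  proof -
    have "t > c/n" unfolding t_def using half_gt[OF \<open>c/n < \<eta>\<close>] .
    then show ?thesis using \<open>n>0\<close> by (simp add: divide_less_eq)
  qed
  ultimately show False by simp
qed

theorem mainTheorem4:
  fixes \<mu> :: "'a::euclidean_space measure"
    and f :: "real \<Rightarrow> nat \<Rightarrow> real"
    and \<eta> :: real and A Ystar :: 'a
  assumes "prob_space \<mu>"
    and "sets \<mu> = sets borel"
    and "compact (measure_support \<mu>)"
    and "\<eta> > 0"
    and "\<forall>X\<in>measure_support \<mu>. measure \<mu> (ball X (\<eta>/2)) \<ge> exp (- f (2/\<eta>) DIM('a))"
    and "eta_interior \<eta> (measure_support \<mu>) A"
    and "Ystar \<in> parallel_subspace (measure_support \<mu>)"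
    and "\<forall>Y\<in>parallel_subspace (measure_support \<mu>). F_obj \<mu> A Ystar \<le> F_obj \<mu> A Y"
  shows "norm Ystar \<le> 2 / \<eta> * f (2/\<eta>) DIM('a)"
proof -
  interpret prob_space \<mu> by fact
  define \<Omega> where "\<Omega> = measure_support \<mu>"
  define ff where "ff = f (2/\<eta>) DIM('a)"
  define Y where "Y = Ystar"
  define g where "g = (\<lambda>X. exp (- inner Y X))"
  have Ahull: "A \<in> convex hull \<Omega>" and Aball: "ball A \<eta> \<inter> affine hull \<Omega> \<subseteq> convex hull \<Omega>"
    using assms(6) unfolding eta_interior_def \<Omega>_def by auto
  have Aaff: "A \<in> affine hull \<Omega>"
    using Ahull convex_hull_subset_affine_hull by blast
  have "\<Omega> \<noteq> {}" using Ahull by auto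
  then obtain X1 where "X1 \<in> \<Omega>" by blast
  have meas: "\<And>X. X \<in> \<Omega> \<Longrightarrow> measure \<mu> (ball X (\<eta>/2)) \<ge> exp (- ff)"
    using assms(5) unfolding \<Omega>_def ff_def by auto
  have ff0: "ff \<ge> 0"
  proof -
    have "exp (- ff) \<le> 1" using meas[OF \<open>X1 \<in> \<Omega>\<close>] prob_le_1[of "ball X1 (\<eta>/2)"] by linarith
    then show ?thesis by simp
  qed
  have AE\<Omega>: "AE x in \<mu>. x \<in> \<Omega>"
    using support_null[OF assms(2)] unfolding \<Omega>_def
    by (auto intro: AE_I')
  have sp: "space \<mu> = UNIV" using assms(2) sets_eq_imp_space_eq by fastforce
  have gmeas: "g \<in> borel_measurable \<mu>"
  proof -
    have "continuous_on UNIV g" unfolding g_def by (intro continuous_intros)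
    then have "g \<in> borel_measurable borel" by (rule borel_measurable_continuous_onI)
    then show ?thesis unfolding measurable_cong_sets[OF assms(2) refl] .
  qed
  obtain B where B: "\<And>x. x \<in> \<Omega> \<Longrightarrow> norm (g x) \<le> B"
  proof -
    have "compact (g ` \<Omega>)" unfolding g_def
      using assms(3) \<Omega>_def by (intro compact_continuous_image continuous_intros) auto
    then show ?thesis using that compact_imp_bounded bounded_iff by (metis imageI)
  qed
  have gint: "integrable \<mu> g"
    by (rule integrable_const_bound[where B=B]) (use AE\<Omega> B gmeas in auto)
  have Yps: "Y \<in> parallel_subspace \<Omega>" using assms(7) unfolding Y_def \<Omega>_def .
  have zero_ps: "0 \<in> parallel_subspace \<Omega>"
    unfolding parallel_subspace_def using Aaff by force
  have F0: "F_obj \<mu> A 0 = 0"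
    unfolding F_obj_def by (simp add: prob_space)
  have Fle: "F_obj \<mu> A Y \<le> 0"
    using assms(8) zero_ps F0 unfolding Y_def \<Omega>_def by metis
  show ?thesis
  proof (cases "Y = 0")
    case True
    then show ?thesis using ff0 assms(4) unfolding Y_def ff_def by simp
  next
    case False
    then have nY: "norm Y > 0" by simp
    have key: "t * norm Y \<le> norm Y * \<eta> / 2 + ff" if t: "0 \<le> t" "t < \<eta>" for t
    proof -
      define P where "P = A - (t / norm Y) *\<^sub>R Y"
      have "P \<in> affine hull \<Omega>"
      proof -
        obtain x y where xy: "Y = x - y" "x \<in> affine hull \<Omega>" "y \<in> affine hull \<Omega>"
          using Yps unfolding parallel_subspace_def by blast
        have sub: "subspace ((\<lambda>z. z - y) ` (affine hull \<Omega>))"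
          by (rule affine_diffs_subspace_subtract) (auto simp: xy)
        have "x - y \<in> (\<lambda>z. z - y) ` (affine hull \<Omega>)" using xy by auto
        moreover have "A - y \<in> (\<lambda>z. z - y) ` (affine hull \<Omega>)" using Aaff by auto
        ultimately have "(A - y) - (t / norm Y) *\<^sub>R (x - y) \<in> (\<lambda>z. z - y) ` (affine hull \<Omega>)"
          using sub by (simp add: subspace_diff subspace_scale)
        then obtain z where z: "z \<in> affine hull \<Omega>" "(A - y) - (t / norm Y) *\<^sub>R (x - y) = z - y" by auto
        have "P = z" using z(2) unfolding P_def xy(1)[symmetric] by (simp add: algebra_simps)
        then show ?thesis using z(1) by simp
      qed
      moreover have "P \<in> ball A \<eta>" unfolding P_def using t nY by (simp add: dist_norm)
      ultimately have Phull: "P \<in> convex hull \<Omega>" using Aball by blast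
      have innP: "inner Y P = inner Y A - t * norm Y"
        unfolding P_def using nY by (simp add: inner_diff_right power2_norm_eq_inner[symmetric] power2_eq_square)
      obtain X0 where X0: "X0 \<in> \<Omega>" "inner Y X0 \<le> inner Y P"
      proof (rule ccontr)
        assume "\<not> thesis"
        then have "\<Omega> \<subseteq> {z. inner Y z > inner Y P}" using that by force
        then have "convex hull \<Omega> \<subseteq> {z. inner Y z > inner Y P}"
          by (intro hull_minimal) (auto simp: convex_halfspace_gt)
        then show False using Phull by auto
      qed
      define c where "c = exp (- inner Y X0 - norm Y * \<eta> / 2)"
      have c0: "c > 0" unfolding c_def by simp
      have "c * exp (- ff) \<le> c * measure \<mu> (ball X0 (\<eta>/2))"
        using meas[OF X0(1)] c0 by simp
      also have "\<dots> = (\<integral>x. c * indicator (ball X0 (\<eta>/2)) x \<partial>\<mu>)"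
        using assms(2) by (simp add: measure_def sets_eq_imp_space_eq)
      also have "\<dots> \<le> integral\<^sup>L \<mu> g"
      proof (rule integral_mono)
        show "integrable \<mu> (\<lambda>x. c * indicator (ball X0 (\<eta>/2)) x)"
          using assms(2) by (intro integrable_real_mult_indicator) (auto simp: sets_eq_imp_space_eq)
        show "integrable \<mu> g" by fact
        fix x assume "x \<in> space \<mu>"
        show "c * indicator (ball X0 (\<eta>/2)) x \<le> g x"
        proof (cases "x \<in> ball X0 (\<eta>/2)")
          case True
          have "inner Y (x - X0) \<le> norm Y * norm (x - X0)" by (rule norm_cauchy_schwarz)
          also have "\<dots> \<le> norm Y * (\<eta>/2)"
            using True nY by (intro mult_left_mono) (auto simp: dist_norm norm_minus_commute)
          finally have "- inner Y X0 - norm Y * \<eta> / 2 \<le> - inner Y x" by (simp add: inner_diff_right)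
          then show ?thesis using True unfolding c_def g_def by simp
        next
          case False
          then show ?thesis unfolding g_def by simp
        qed
      qed
      finally have low: "c * exp (- ff) \<le> integral\<^sup>L \<mu> g" .
      have "ln (c * exp (- ff)) \<le> ln (integral\<^sup>L \<mu> g)"
        using low c0 by (intro ln_mono) auto
      then have "- inner Y X0 - norm Y * \<eta> / 2 - ff \<le> ln (integral\<^sup>L \<mu> g)"
        using c0 unfolding c_def by (simp add: ln_mult)
      moreover have "inner Y A + ln (integral\<^sup>L \<mu> g) \<le> 0"
        using Fle unfolding F_obj_def g_def .
      ultimately show ?thesis using X0(2) innP by linarith
    qed
    have "\<eta> * norm Y \<le> norm Y * \<eta> / 2 + ff"
      by (rule lim_arg) (use assms(4) ff0 key in auto)
    then have "norm Y * \<eta> \<le> 2 * ff" by (simp add: algebra_simps)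
    then have "norm Y \<le> 2 * ff / \<eta>" using assms(4) by (simp add: le_divide_eq)
    then show ?thesis unfolding Y_def ff_def by simp
  qed
qed

end
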